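(* Let $f(t)\in\mathbb{F}_2[t]$ be irreducible, $f(t)\neq t$, not self-reciprocal, and $R_f=\mathbb{F}_2[t,t^{-1},f(t)^{-1}]$. Let $\varphi$ be an automorphism of $(R_f,+)$ and $\Phi$ an automorphism of $U(R_f)$. (a) If $\Phi(u)\varphi(1)=\varphi(u)$ for all $u\in U(R_f)$, then $\Phi(u)=u$ for all $u\in U(R_f)$. (b) If $\Phi(u)\varphi(1)=\varphi(u^{-1})$ for all $u\in U(R_f)$, then $\Phi(u)=u^{-1}$ for all $u\in U(R_f)$.
   Context: A polynomial $f(t)$ of degree $m$ is self-reciprocal if $t^m f(1/t)=f(t)$. *)

theory Defs
  imports "HOL-Computational_Algebra.Polynomial" "HOL-Computational_Algebra.Fraction_Field"
          "HOL-Library.Z2"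
begin

text \<open>F_2 is the two-element field bit; F_2[t] is bit poly; elements of
  R_f = F_2[t, t^-1, f^-1] are viewed inside the fraction field of F_2[t].\<close>

definition self_reciprocal :: "bit poly \<Rightarrow> bool" where
  "self_reciprocal f \<longleftrightarrow> reflect_poly f = f"

definition Rf :: "bit poly \<Rightarrow> bit poly fract set" where
  "Rf f = {x. \<exists>p a b. x = Fract p (monom 1 a * f ^ b)}"

definition units_Rf :: "bit poly \<Rightarrow> bit poly fract set" where
  "units_Rf f = {u \<in> Rf f. \<exists>v \<in> Rf f. u * v = 1}"

definition additive_aut :: "bit poly \<Rightarrow> (bit poly fract \<Rightarrow> bit poly fract) \<Rightarrow> bool" where
  "additive_aut f \<phi> \<longleftrightarrow> bij_betw \<phi> (Rf f) (Rf f) \<and>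
     (\<forall>x \<in> Rf f. \<forall>y \<in> Rf f. \<phi> (x + y) = \<phi> x + \<phi> y)"

definition unit_group_aut :: "bit poly \<Rightarrow> (bit poly fract \<Rightarrow> bit poly fract) \<Rightarrow> bool" where
  "unit_group_aut f \<Phi> \<longleftrightarrow> bij_betw \<Phi> (units_Rf f) (units_Rf f) \<and>
     (\<forall>u \<in> units_Rf f. \<forall>v \<in> units_Rf f. \<Phi> (u * v) = \<Phi> u * \<Phi> v)"

end

theory Submission imports Defs "HOL-Computational_Algebra.Polynomial_Factorial" begin

lemma bit_of_nat_odd: "odd n \<Longrightarrow> (of_nat n :: bit) = 1"
  using Z2.bit_eq_iff even_of_nat by blast

lemma bitpoly_two: "(1::bit poly) + 1 = 0"
proof -
  have "(1::bit poly) + 1 = [:1 + 1:]" by (simp only: one_pCons add_pCons) simp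
  also have "(1::bit) + 1 = 0" by (metis one_add_one bit_2_eq_0)
  finally show ?thesis by (simp only: pCons_0_0)
qed

lemma fract_char2: "(x::bit poly fract) + x = 0"
proof -
  have "(1::bit poly fract) + 1 = to_fract ((1::bit poly) + 1)" by (simp only: to_fract_add to_fract_1)
  also have "\<dots> = 0" by (simp only: bitpoly_two to_fract_0)
  finally have "(1::bit poly fract) + 1 = 0" .
  then have "x * (1 + 1) = 0" by (simp only: mult_zero_right)
  then show ?thesis by (simp only: distrib_left mult_1_right)
qed

lemma bit_nz: "(c::bit) \<noteq> 0 \<Longrightarrow> c = 1" by simp

lemma term_coeff_low:
  assumes "coeff (f::bit poly) 0 = 1" and "n < e"
  shows "coeff (monom 1 e * f ^ g) n = 0"
  using assms by (simp add: coeff_monom_mult)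

lemma term_coeff_e:
  assumes "coeff (f::bit poly) 0 = 1"
  shows "coeff (monom 1 e * f ^ g) e = 1"
  using assms by (simp add: coeff_monom_mult coeff_0_power)

lemma term_degree:
  assumes "(f::bit poly) \<noteq> 0"
  shows "degree (monom 1 e * f ^ g) = e + g * degree f"
  using assms by (simp add: degree_mult_eq degree_monom_eq degree_power_eq)

lemma term_coeff_high:
  assumes "(f::bit poly) \<noteq> 0" and "n > e + g * degree f"
  shows "coeff (monom 1 e * f ^ g) n = 0"
  using assms term_degree coeff_eq_0 by metis

lemma term_coeff_top:
  assumes "(f::bit poly) \<noteq> 0"
  shows "coeff (monom 1 e * f ^ g) (e + g * degree f) = 1"
proof -
  have "monom 1 e * f ^ g \<noteq> 0" using assms by simp
  then have "lead_coeff (monom 1 e * f ^ g) \<noteq> 0" by simp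
  then show ?thesis using term_degree[OF assms] by (metis bit_nz)
qed

lemma sum_if_card: "finite I \<Longrightarrow> (\<Sum>i\<in>I. if P i then (1::bit) else 0) = of_nat (card {i\<in>I. P i})"
proof -
  assume "finite I"
  moreover have "{i\<in>I. P i} = I \<inter> Collect P" by auto
  ultimately show ?thesis by (simp add: sum.If_cases)
qed

lemma bit_odd_card: "finite I \<Longrightarrow> odd (card {i\<in>I. P i}) \<Longrightarrow> (\<Sum>i\<in>I. if P i then (1::bit) else 0) = 1"
  using sum_if_card bit_of_nat_odd by metis

lemma sum_low:
  fixes f :: "bit poly"
  assumes f0: "coeff f 0 = 1" and fin: "finite I"
    and eq: "(\<Sum>i\<in>I. monom 1 (e i) * f ^ g i) = monom 1 e0 * f ^ g0"
    and ge: "\<forall>i\<in>I. m \<le> e i" and od: "odd (card {i\<in>I. e i = m})"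
  shows "e0 = m"
proof -
  have c: "coeff (monom 1 e0 * f ^ g0) n = (\<Sum>i\<in>I. coeff (monom 1 (e i) * f ^ g i) n)" for n
    using eq coeff_sum by metis
  have z: "coeff (monom 1 e0 * f ^ g0) n = 0" if "n < m" for n
    unfolding c using that ge term_coeff_low[OF f0] by (auto intro!: sum.neutral)
  have "coeff (monom 1 e0 * f ^ g0) m = (\<Sum>i\<in>I. if e i = m then (1::bit) else 0)"
    unfolding c
  proof (rule sum.cong)
    fix i assume "i \<in> I"
    then have "m \<le> e i" using ge by auto
    then show "coeff (monom 1 (e i) * f ^ g i) m = (if e i = m then 1 else 0)"
      using term_coeff_low[OF f0] term_coeff_e[OF f0] by (cases "e i = m") auto
  qed simp
  also have "\<dots> = 1" using bit_odd_card[OF fin od] .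
  finally have o: "coeff (monom 1 e0 * f ^ g0) m = 1" .
  show ?thesis
  proof (rule ccontr)
    assume "e0 \<noteq> m"
    then show False
    proof (cases "e0 < m")
      case True
      then show False using z[OF True] term_coeff_e[OF f0, of e0 g0] by simp
    next
      case False
      then have "m < e0" using \<open>e0 \<noteq> m\<close> by simp
      then show False using o term_coeff_low[OF f0 \<open>m < e0\<close>, of g0] by simp
    qed
  qed
qed

lemma sum_high:
  fixes f :: "bit poly"
  assumes f0: "f \<noteq> 0" and fin: "finite I"
    and eq: "(\<Sum>i\<in>I. monom 1 (e i) * f ^ g i) = monom 1 e0 * f ^ g0"
    and le: "\<forall>i\<in>I. e i + g i * degree f \<le> m" and od: "odd (card {i\<in>I. e i + g i * degree f = m})"
  shows "e0 + g0 * degree f = m"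
proof -
  have c: "coeff (monom 1 e0 * f ^ g0) n = (\<Sum>i\<in>I. coeff (monom 1 (e i) * f ^ g i) n)" for n
    using eq coeff_sum by metis
  have z: "coeff (monom 1 e0 * f ^ g0) n = 0" if "m < n" for n
    unfolding c using that le term_coeff_high[OF f0] by (auto intro!: sum.neutral)
  have "coeff (monom 1 e0 * f ^ g0) m = (\<Sum>i\<in>I. if e i + g i * degree f = m then (1::bit) else 0)"
    unfolding c
  proof (rule sum.cong)
    fix i assume "i \<in> I"
    then have "e i + g i * degree f \<le> m" using le by auto
    then show "coeff (monom 1 (e i) * f ^ g i) m = (if e i + g i * degree f = m then 1 else 0)"
      using term_coeff_high[OF f0] term_coeff_top[OF f0] by (cases "e i + g i * degree f = m") auto
  qed simp
  also have "\<dots> = 1" using bit_odd_card[OF fin od] .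
  finally have o: "coeff (monom 1 e0 * f ^ g0) m = 1" .
  show ?thesis
  proof (rule ccontr)
    assume ne: "e0 + g0 * degree f \<noteq> m"
    then show False
    proof (cases "m < e0 + g0 * degree f")
      case True
      then show False using z[OF True] term_coeff_top[OF f0, of e0 g0] by simp
    next
      case False
      then have "e0 + g0 * degree f < m" using ne by simp
      then show False using o term_coeff_high[OF f0 \<open>e0 + g0 * degree f < m\<close>] by simp
    qed
  qed
qed

lemma term_dvd_iff:
  fixes f :: "bit poly"
  assumes pf: "prime_elem f" and nd: "\<not> f dvd [:0,1:]" and dpos: "degree f > 0"
  shows "f ^ j dvd monom 1 e * f ^ g \<longleftrightarrow> j \<le> g"
proof
  assume "j \<le> g" then show "f ^ j dvd monom 1 e * f ^ g"
    by (intro dvd_mult le_imp_power_dvd)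
next
  assume h: "f ^ j dvd monom 1 e * f ^ g"
  have nt: "\<not> f dvd [:0,1:] ^ e"
  proof (induction e)
    case 0
    then show ?case using pf by (simp add: prime_elem_def)
  next
    case (Suc e)
    then show ?case using nd pf prime_elem_dvd_mult_iff by (metis power_Suc)
  qed
  show "j \<le> g"
  proof (rule ccontr)
    assume "\<not> j \<le> g"
    then have "f ^ j = f ^ (j - g) * f ^ g" by (simp add: power_add[symmetric])
    moreover have "f ^ g \<noteq> 0" using pf by (auto simp: prime_elem_def)
    moreover have "f \<noteq> 0" using pf by (auto simp: prime_elem_def)
    ultimately have "f ^ (j - g) dvd monom 1 e" using h by simp
    moreover have "f dvd f ^ (j - g)" using \<open>\<not> j \<le> g\<close> by simp
    ultimately have "f dvd [:0,1:] ^ e" by (metis dvd_trans monom_altdef smult_1_left)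
    then show False using nt by simp
  qed
qed

lemma sum_fval:
  fixes f :: "bit poly"
  assumes pf: "prime_elem f" and nd: "\<not> f dvd [:0,1:]" and dpos: "degree f > 0" and fin: "finite I"
    and eq: "(\<Sum>i\<in>I. monom 1 (e i) * f ^ g i) = monom 1 e0 * f ^ g0"
    and i0: "i0 \<in> I" and gt: "\<forall>i\<in>I. i \<noteq> i0 \<longrightarrow> g i0 < g i"
  shows "g0 = g i0"
proof -
  let ?m = "g i0"
  have "f ^ ?m dvd (\<Sum>i\<in>I. monom 1 (e i) * f ^ g i)"
    by (rule dvd_sum) (use gt term_dvd_iff[OF pf nd dpos] in \<open>auto simp: order_less_imp_le\<close>)
  then have a: "?m \<le> g0" using eq term_dvd_iff[OF pf nd dpos] by simp
  have split: "(\<Sum>i\<in>I. monom 1 (e i) * f ^ g i) = monom 1 (e i0) * f ^ g i0 + (\<Sum>i\<in>I-{i0}. monom 1 (e i) * f ^ g i)"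
    using fin i0 by (simp add: sum.remove)
  have r: "f ^ Suc ?m dvd (\<Sum>i\<in>I-{i0}. monom 1 (e i) * f ^ g i)"
  proof (rule dvd_sum)
    fix i assume "i \<in> I-{i0}"
    then have "Suc ?m \<le> g i" using gt by auto
    then show "f ^ Suc ?m dvd monom 1 (e i) * f ^ g i" using term_dvd_iff[OF pf nd dpos, of "Suc ?m"] by blast
  qed
  have "\<not> f ^ Suc ?m dvd monom 1 (e i0) * f ^ g i0" using term_dvd_iff[OF pf nd dpos, of "Suc ?m" "e i0" "g i0"] by (metis Suc_n_not_le_n)
  then have "\<not> f ^ Suc ?m dvd (\<Sum>i\<in>I. monom 1 (e i) * f ^ g i)"
    unfolding split using r dvd_add_left_iff by blast
  then have "\<not> Suc ?m \<le> g0" using eq term_dvd_iff[OF pf nd dpos, of "Suc ?m"] by metis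
  then show ?thesis using a by simp
qed

lemma unit_bitpoly: "is_unit (q::bit poly) \<Longrightarrow> q = 1"
proof -
  assume "is_unit q"
  then obtain c where "q = [:c:]" "c dvd 1" using is_unit_poly_iff by blast
  then have "c \<noteq> 0" by auto
  then have "c = 1" by simp
  then show "q = 1" using \<open>q = [:c:]\<close> by (simp add: one_pCons)
qed

lemma t_not_unit: "\<not> is_unit ([:0,1:] :: bit poly)"
  using unit_bitpoly by (metis coeff_pCons_0 one_poly_eq_simps(1) pCons_eq_iff zero_neq_one)

lemma irr_factor:
  fixes f p :: "bit poly"
  assumes irr: "irreducible f" and "p dvd f" and "\<not> is_unit p"
  shows "f = p"
proof -
  obtain q where q: "f = p * q" using assms(2) by blast
  then have "is_unit p \<or> is_unit q" using irr irreducibleD by blast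
  then have "q = 1" using assms(3) unit_bitpoly by blast
  then show ?thesis using q by simp
qed

lemma f_props:
  fixes f :: "bit poly"
  assumes irr: "irreducible f" and nt: "f \<noteq> [:0,1:]" and nsr: "\<not> self_reciprocal f"
  shows "f \<noteq> 0" "degree f > 0" "coeff f 0 = 1" "poly f 1 = 1" "\<not> f dvd [:0,1:]" "prime_elem f"
proof -
  show f0: "f \<noteq> 0" using irr by (simp add: irreducible_def)
  show "prime_elem f" using irr field_poly_irreducible_imp_prime by blast
  show dpos: "degree f > 0"
  proof (rule ccontr)
    assume "\<not> degree f > 0"
    then have "f = [:coeff f 0:]" by (metis degree_0_id gr0I)
    moreover have "coeff f 0 \<noteq> 0" using f0 \<open>f = [:coeff f 0:]\<close> by (metis pCons_0_0)
    ultimately have "f = 1" by (simp add: one_pCons)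
    then show False using irr by (simp add: irreducible_def)
  qed
  show c0: "coeff f 0 = 1"
  proof (rule ccontr)
    assume "coeff f 0 \<noteq> 1"
    then have "poly f 0 = 0" by (simp add: poly_0_coeff_0)
    then have "[:0,1:] dvd f" using poly_eq_0_iff_dvd[of f 0] by simp
    then have "f = [:0,1:]" using irr_factor[OF irr] t_not_unit by blast
    then show False using nt by simp
  qed
  show "poly f 1 = 1"
  proof (rule ccontr)
    assume "poly f 1 \<noteq> 1"
    then have "poly f 1 = 0" by simp
    then have "[:-1,1:] dvd f" using poly_eq_0_iff_dvd[of f 1] by simp
    then have d: "[:1,1:] dvd f" by simp
    have "\<not> is_unit ([:1,1:] :: bit poly)" using unit_bitpoly by (metis one_pCons pCons_eq_iff zero_neq_one)
    then have "f = [:1,1:]" using irr_factor[OF irr d] by blast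
    moreover have "reflect_poly ([:1,1:] :: bit poly) = [:1,1:]" by (simp add: reflect_poly_def)
    ultimately show False using nsr by (simp add: self_reciprocal_def)
  qed
  show "\<not> f dvd [:0,1:]"
  proof
    assume "f dvd [:0,1:]"
    then obtain q where q: "[:0,1:] = f * q" by blast
    have "coeff ([:0,1:] :: bit poly) 0 = coeff f 0 * coeff q 0" unfolding q by (simp add: coeff_mult)
    then have "coeff q 0 = 0" using c0 by simp
    then have "poly q 0 = 0" by (simp add: poly_0_coeff_0)
    then have "[:0,1:] dvd q" using poly_eq_0_iff_dvd[of q 0] by simp
    then obtain r where r: "q = [:0,1:] * r" by blast
    have "[:0,1:] * 1 = [:0,1:] * (f * r)" using q r by (metis mult.left_commute mult_1_right)
    moreover have "([:0,1:] :: bit poly) \<noteq> 0" by simp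
    ultimately have "f * r = 1" using mult_left_cancel by metis
    then have "is_unit f" by (metis dvd_triv_left)
    then show False using irr by (simp add: irreducible_def)
  qed
qed
definition Tf :: "bit poly fract" where "Tf = to_fract [:0,1:]"
definition Ef :: "bit poly \<Rightarrow> int \<Rightarrow> int \<Rightarrow> bit poly fract" where
  "Ef f a b = Tf powi a * to_fract f powi b"

lemma to_fract_power: "to_fract (p ^ n) = to_fract p ^ n"
  by (induction n) simp_all

lemma Tf_nz: "Tf \<noteq> 0" by (simp add: Tf_def)

lemma Ef_nz: "f \<noteq> 0 \<Longrightarrow> Ef f a b \<noteq> 0"
  by (simp add: Ef_def Tf_nz power_int_not_zero)

lemma Ef_mult: "f \<noteq> 0 \<Longrightarrow> Ef f a b * Ef f c e = Ef f (a + c) (b + e)"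
  by (simp add: Ef_def Tf_nz power_int_add algebra_simps)

lemma Ef_powi: "Ef f a b powi n = Ef f (a * n) (b * n)"
  by (simp add: Ef_def power_int_mult_distrib power_int_mult)

lemma Ef_pow: "Ef f a b ^ n = Ef f (a * int n) (b * int n)"
  using Ef_powi[of f a b "int n"] by simp

lemma Ef_inverse: "inverse (Ef f a b) = Ef f (- a) (- b)"
  by (simp add: Ef_def power_int_minus mult.commute)

lemma Ef_00: "Ef f 0 0 = 1" by (simp add: Ef_def)
lemma Ef_10: "Ef f 1 0 = Tf" by (simp add: Ef_def)
lemma Ef_01: "Ef f 0 1 = to_fract f" by (simp add: Ef_def)

lemma Ef_nonneg: "a \<ge> 0 \<Longrightarrow> b \<ge> 0 \<Longrightarrow> Ef f a b = to_fract (monom 1 (nat a) * f ^ nat b)"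
  by (simp add: Ef_def Tf_def power_int_nonneg_exp to_fract_power monom_altdef)

lemma clear_denoms:
  assumes f0: "f \<noteq> 0" and fin: "finite I"
    and eq: "(\<Sum>i\<in>I. Ef f (x i) (y i)) = Ef f k l"
    and nn: "\<forall>i\<in>I. x i + int N \<ge> 0 \<and> y i + int M \<ge> 0" and nn2: "k + int N \<ge> 0" "l + int M \<ge> 0"
  shows "(\<Sum>i\<in>I. monom 1 (nat (x i + int N)) * f ^ nat (y i + int M)) = monom 1 (nat (k + int N)) * f ^ nat (l + int M)"
proof -
  have "(\<Sum>i\<in>I. Ef f (x i) (y i)) * Ef f (int N) (int M) = Ef f k l * Ef f (int N) (int M)"
    using eq by simp
  then have "(\<Sum>i\<in>I. Ef f (x i + int N) (y i + int M)) = Ef f (k + int N) (l + int M)"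
    by (simp add: sum_distrib_right Ef_mult[OF f0])
  also have "(\<Sum>i\<in>I. Ef f (x i + int N) (y i + int M)) = (\<Sum>i\<in>I. to_fract (monom 1 (nat (x i + int N)) * f ^ nat (y i + int M)))"
    using nn by (intro sum.cong) (auto simp: Ef_nonneg)
  finally have "(\<Sum>i\<in>I. to_fract (monom 1 (nat (x i + int N)) * f ^ nat (y i + int M))) = to_fract (monom 1 (nat (k + int N)) * f ^ nat (l + int M))"
    using Ef_nonneg[OF nn2] by simp
  then have "to_fract (\<Sum>i\<in>I. monom 1 (nat (x i + int N)) * f ^ nat (y i + int M)) = to_fract (monom 1 (nat (k + int N)) * f ^ nat (l + int M))"
    by (simp only: to_fract_sum)
  then show ?thesis by (simp only: to_fract_eq_iff)
qed

lemma affine_count: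
  fixes S :: "nat set" and d :: nat and c :: int
  assumes fin: "finite S" and dpos: "d > 0" and le: "\<forall>i\<in>S. i \<le> d" and s0: "0 \<in> S" and sd: "d \<in> S"
    and od: "odd (card S)"
  shows "\<forall>i\<in>S. int d * min c 0 \<le> c * int i"
    and "odd (card {i\<in>S. c * int i = int d * min c 0})"
    and "\<forall>i\<in>S. c * int i \<le> int d * max c 0"
    and "odd (card {i\<in>S. c * int i = int d * max c 0})"
    and "c \<noteq> 0 \<Longrightarrow> \<forall>i\<in>S. i \<noteq> (if c > 0 then 0 else d) \<longrightarrow> c * int (if c > 0 then 0 else d) < c * int i"
proof -
  have A: "{i\<in>S. c * int i = 0} = {0}" if "c \<noteq> 0" using that s0 by auto
  have B: "{i\<in>S. c * int i = int d * c} = {d}" if "c \<noteq> 0" using that sd by auto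
  have C: "{i\<in>S. c * int i = int d * min c 0} = S" "{i\<in>S. c * int i = int d * max c 0} = S" if "c = 0"
    using that by auto
  have le': "int i \<le> int d" if "i \<in> S" for i using le that by auto
  show "\<forall>i\<in>S. int d * min c 0 \<le> c * int i"
  proof
    fix i assume i: "i \<in> S"
    show "int d * min c 0 \<le> c * int i"
    proof (cases "c < 0")
      case True
      then have "c * int d \<le> c * int i" using le'[OF i] mult_left_mono_neg by (metis less_le)
      then show ?thesis using True by (simp add: min_def mult.commute)
    qed (simp add: min_def)
  qed
  show "\<forall>i\<in>S. c * int i \<le> int d * max c 0"
  proof
    fix i assume i: "i \<in> S"
    show "c * int i \<le> int d * max c 0"
    proof (cases "c > 0")
      case True
      then have "c * int i \<le> c * int d" using le'[OF i] by simp
      then show ?thesis using True by (simp add: max_def mult.commute)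
    next
      case False
      then show ?thesis by (simp add: max_def mult_nonpos_nonneg)
    qed
  qed
  show "odd (card {i\<in>S. c * int i = int d * min c 0})"
  proof (cases "c < 0")
    case True
    then have "int d * min c 0 = int d * c" by simp
    then show ?thesis using B True by simp
  next
    case False
    then show ?thesis using A C od by (cases "c = 0") (auto simp: min_def)
  qed
  show "odd (card {i\<in>S. c * int i = int d * max c 0})"
  proof (cases "c > 0")
    case True
    then have "int d * max c 0 = int d * c" by simp
    then show ?thesis using B True by simp
  next
    case False
    then show ?thesis using A C od by (cases "c = 0") (auto simp: max_def)
  qed
  show "c \<noteq> 0 \<Longrightarrow> \<forall>i\<in>S. i \<noteq> (if c > 0 then 0 else d) \<longrightarrow> c * int (if c > 0 then 0 else d) < c * int i"
  proof (intro ballI impI)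
    fix i assume c: "c \<noteq> 0" and i: "i \<in> S" and ne: "i \<noteq> (if c > 0 then 0 else d)"
    show "c * int (if c > 0 then 0 else d) < c * int i"
    proof (cases "c > 0")
      case True
      then show ?thesis using ne by simp
    next
      case False
      then have "c < 0" using c by simp
      moreover have "int i < int d" using le'[OF i] ne False by auto
      ultimately show ?thesis using False by simp
    qed
  qed
qed

lemma arith_final:
  fixes a b k l :: int and d :: nat
  assumes "d > 0" "k = int d * min a 0" "b \<noteq> 0 \<longrightarrow> l = int d * min b 0"
    "k + l * int d = int d * max (a + b * int d) 0"
  shows "b = 0 \<and> l = \<bar>a\<bar>"
proof (cases "b = 0")
  case True
  then have "int d * (min a 0 + l) = int d * max a 0" using assms by (simp add: algebra_simps)
  then have "min a 0 + l = max a 0" using assms(1) by simp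
  then show ?thesis using True by auto
next
  case False
  then have l: "l = int d * min b 0" using assms by simp
  have dp: "int d > 0" using assms(1) by simp
  have "int d * (min a 0 + min b 0 * int d) = int d * max (a + b * int d) 0"
    using assms(2,4) l by (simp add: algebra_simps)
  then have e: "min a 0 + min b 0 * int d = max (a + b * int d) 0" using dp by simp
  show ?thesis
  proof (cases "b > 0")
    case True
    then have "b * int d > 0" using dp by simp
    then show ?thesis using e True by (auto simp: min_def max_def split: if_splits)
  next
    case F: False
    then have "b < 0" using False by simp
    then have "b * int d < 0" using dp by (simp add: mult_neg_pos)
    then show ?thesis using e \<open>b < 0\<close> by (auto simp: min_def max_def split: if_splits)
  qed
qed

lemma core:
  fixes f :: "bit poly" and S :: "nat set"
  assumes f0: "f \<noteq> 0" and dpos: "degree f > 0" and c0: "coeff f 0 = 1" and nd: "\<not> f dvd [:0,1:]"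
    and pf: "prime_elem f"
    and fin: "finite S" and le: "\<forall>i\<in>S. i \<le> degree f" and s0: "0 \<in> S" and sd: "degree f \<in> S"
    and od: "odd (card S)"
    and eq: "(\<Sum>i\<in>S. Ef f (a * int i) (b * int i)) = Ef f k l"
  shows "b = 0 \<and> k = int (degree f) * min a 0 \<and> l = \<bar>a\<bar>"
proof -
  define d where "d = degree f"
  have dp: "int d > 0" using dpos d_def by simp
  have led: "int i \<le> int d" if "i \<in> S" for i using le that d_def by auto
  define N where "N = nat (\<bar>a\<bar> * int d + \<bar>k\<bar>)"
  define M where "M = nat (\<bar>b\<bar> * int d + \<bar>l\<bar>)"
  have bnd: "\<bar>c * int i\<bar> \<le> \<bar>c\<bar> * int d" if "i \<in> S" for c i
    using led[OF that] by (simp add: abs_mult mult_left_mono)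
  have bnd2: "\<bar>c * int d\<bar> \<le> \<bar>c\<bar> * int d" for c by (simp add: abs_mult)
  have Nge: "int N \<ge> \<bar>a\<bar> * int d + \<bar>k\<bar>" unfolding N_def using dp by simp
  have Mge: "int M \<ge> \<bar>b\<bar> * int d + \<bar>l\<bar>" unfolding M_def using dp by simp
  have nnx: "a * int i + int N \<ge> 0" if "i \<in> S" for i using bnd[OF that, of a] Nge by linarith
  have nny: "b * int i + int M \<ge> 0" if "i \<in> S" for i using bnd[OF that, of b] Mge by linarith
  have nnk: "k + int N \<ge> 0" using Nge abs_ge_minus_self[of k] mult_nonneg_nonneg[OF abs_ge_zero[of a], of "int d"] by linarith
  have nnl: "l + int M \<ge> 0" using Mge abs_ge_minus_self[of l] mult_nonneg_nonneg[OF abs_ge_zero[of b], of "int d"] by linarith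
  define e where "e i = nat (a * int i + int N)" for i
  define g where "g i = nat (b * int i + int M)" for i
  have peq: "(\<Sum>i\<in>S. monom 1 (e i) * f ^ g i) = monom 1 (nat (k + int N)) * f ^ nat (l + int M)"
    unfolding e_def g_def
    by (rule clear_denoms[OF f0 fin eq]) (use nnx nny nnk nnl in auto)
  note AC = affine_count[OF fin dpos[folded d_def] le[folded d_def] s0 sd[folded d_def] od]
  have mn0: "int d * min a 0 \<ge> -(\<bar>a\<bar> * int d)"
  proof (cases "a \<le> 0")
    case True then show ?thesis by (simp add: min_def abs_if)
  next
    case False then show ?thesis using dp by (simp add: min_def)
  qed
  have mn: "int d * min a 0 + int N \<ge> 0" using mn0 Nge abs_ge_zero[of k] by linarith
  have "nat (k + int N) = nat (int d * min a 0 + int N)"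
  proof (rule sum_low[OF c0 fin peq])
    show "\<forall>i\<in>S. nat (int d * min a 0 + int N) \<le> e i"
      using AC(1)[of a] unfolding e_def by (auto intro: nat_mono)
    have "{i\<in>S. e i = nat (int d * min a 0 + int N)} = {i\<in>S. a * int i = int d * min a 0}"
      unfolding e_def using nnx mn by (auto simp: nat_eq_iff2 eq_nat_nat_iff)
    then show "odd (card {i\<in>S. e i = nat (int d * min a 0 + int N)})" using AC(2)[of a] by simp
  qed
  then have k: "k = int d * min a 0" using nnk mn by (simp add: eq_nat_nat_iff)
  have l: "b \<noteq> 0 \<longrightarrow> l = int d * min b 0"
  proof
    assume b: "b \<noteq> 0"
    define i0 where "i0 = (if b > 0 then 0 else d)"
    have i0S: "i0 \<in> S" using s0 sd d_def i0_def by auto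
    have "nat (l + int M) = g i0"
    proof (rule sum_fval[OF pf nd dpos fin peq i0S])
      show "\<forall>i\<in>S. i \<noteq> i0 \<longrightarrow> g i0 < g i"
      proof (intro ballI impI)
        fix i assume i: "i \<in> S" "i \<noteq> i0"
        have "b * int i0 < b * int i" using AC(5)[OF b] i unfolding i0_def by blast
        then show "g i0 < g i" unfolding g_def using nny[OF i0S] by (simp add: nat_less_eq_zless)
      qed
    qed
    then have "l = b * int i0" using nnl nny[OF i0S] unfolding g_def by (simp add: eq_nat_nat_iff)
    then show "l = int d * min b 0" unfolding i0_def using b by (auto simp: min_def)
  qed
  define D where "D = a + b * int d"
  have evD: "int (e i + g i * degree f) = int N + int M * int d + D * int i" if "i \<in> S" for i
    unfolding e_def g_def D_def d_def using nnx[OF that] nny[OF that] d_def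
    by (simp add: algebra_simps)
  have mx: "int d * max D 0 \<ge> 0" using dp by simp
  define m where "m = nat (int N + int M * int d + int d * max D 0)"
  have mi: "int m = int N + int M * int d + int d * max D 0" unfolding m_def using mx by simp
  have "nat (k + int N) + nat (l + int M) * degree f = m"
  proof (rule sum_high[OF f0 fin peq])
    show "\<forall>i\<in>S. e i + g i * degree f \<le> m"
    proof
      fix i assume i: "i \<in> S"
      have "int (e i + g i * degree f) \<le> int m" using evD[OF i] mi AC(3)[of D] i by (simp add: mult.commute)
      then show "e i + g i * degree f \<le> m" by (simp only: of_nat_le_iff)
    qed
    have "{i\<in>S. e i + g i * degree f = m} = {i\<in>S. D * int i = int d * max D 0}"
    proof -
      have "e i + g i * degree f = m \<longleftrightarrow> D * int i = int d * max D 0" if i: "i \<in> S" for i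
      proof -
        have "e i + g i * degree f = m \<longleftrightarrow> int (e i + g i * degree f) = int m" by (simp only: of_nat_eq_iff)
        also have "\<dots> \<longleftrightarrow> D * int i = int d * max D 0" using evD[OF i] mi by simp
        finally show ?thesis .
      qed
      then show ?thesis by auto
    qed
    then show "odd (card {i\<in>S. e i + g i * degree f = m})" using AC(4)[of D] by simp
  qed
  then have "int (nat (k + int N) + nat (l + int M) * degree f) = int m" by simp
  then have "k + int N + (l + int M) * int d = int N + int M * int d + int d * max D 0"
    using nnk nnl mi d_def by simp
  then have deg: "k + l * int d = int d * max (a + b * int d) 0" unfolding D_def by (simp add: algebra_simps)
  have "b = 0 \<and> l = \<bar>a\<bar>" using arith_final[OF _ k l deg] dpos d_def by simp
  then show ?thesis using k d_def by simp
qed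

lemma bit_of_nat_even: "even n \<Longrightarrow> (of_nat n :: bit) = 0"
  using Z2.bit_eq_iff even_of_nat by (metis even_zero)

lemma S_facts:
  fixes f :: "bit poly"
  assumes f0: "f \<noteq> 0" and c0: "coeff f 0 = 1" and p1: "poly f 1 = 1"
  defines "S \<equiv> {i. i \<le> degree f \<and> coeff f i \<noteq> 0}"
  shows "finite S" "\<forall>i\<in>S. i \<le> degree f" "0 \<in> S" "degree f \<in> S" "odd (card S)"
    "f = (\<Sum>i\<in>S. monom 1 i)"
proof -
  show fin: "finite S" unfolding S_def by simp
  show "\<forall>i\<in>S. i \<le> degree f" unfolding S_def by simp
  show "0 \<in> S" unfolding S_def using c0 by simp
  show "degree f \<in> S" unfolding S_def using leading_coeff_neq_0[OF f0] by blast
  have SS: "S = {i\<in>{..degree f}. coeff f i \<noteq> 0}" unfolding S_def by auto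
  have "poly f 1 = (\<Sum>i\<le>degree f. coeff f i)" by (simp only: poly_altdef power_one mult_1_right)
  also have "\<dots> = (\<Sum>i\<le>degree f. if coeff f i \<noteq> 0 then (1::bit) else 0)"
  proof (rule sum.cong)
    fix i show "coeff f i = (if coeff f i \<noteq> 0 then (1::bit) else 0)"
      by (cases "coeff f i = 0") auto
  qed (rule refl)
  also have "\<dots> = of_nat (card S)" unfolding SS by (rule sum_if_card) simp
  finally have "(of_nat (card S) :: bit) = 1" using p1 by simp
  then show "odd (card S)" using bit_of_nat_even by force
  have "f = (\<Sum>i\<le>degree f. monom (coeff f i) i)" by (simp add: poly_as_sum_of_monoms)
  also have "\<dots> = (\<Sum>i\<le>degree f. if coeff f i \<noteq> 0 then monom 1 i else 0)"
    by (rule sum.cong) auto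
  also have "\<dots> = (\<Sum>i\<in>S. monom 1 i)" unfolding SS by (rule sum.inter_filter[symmetric]) simp
  finally show "f = (\<Sum>i\<in>S. monom 1 i)" .
qed

lemma Ef_in_Rf:
  assumes f0: "f \<noteq> 0"
  shows "Ef f a b \<in> Rf f"
proof -
  have "Ef f a b = Ef f (int (nat a)) (int (nat b)) * Ef f (- int (nat (-a))) (- int (nat (-b)))"
    by (simp add: Ef_mult[OF f0])
  also have "\<dots> = to_fract (monom 1 (nat a) * f ^ nat b) / to_fract (monom 1 (nat (-a)) * f ^ nat (-b))"
    by (simp add: Ef_nonneg Ef_inverse[symmetric] divide_inverse del: to_fract_mult)
  also have "\<dots> = Fract (monom 1 (nat a) * f ^ nat b) (monom 1 (nat (-a)) * f ^ nat (-b))"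
    by (simp add: Fract_conv_to_fract)
  finally show ?thesis unfolding Rf_def by blast
qed

lemma Ef_unit:
  assumes f0: "f \<noteq> 0"
  shows "Ef f a b \<in> units_Rf f"
proof -
  have "Ef f a b * Ef f (-a) (-b) = 1" by (simp add: Ef_mult[OF f0] Ef_00)
  then show ?thesis unfolding units_Rf_def using Ef_in_Rf[OF f0] by blast
qed

lemma t_pow_factor:
  fixes p q :: "bit poly"
  shows "p * q = [:0,1:] ^ n \<Longrightarrow> \<exists>x. p = [:0,1:] ^ x"
proof (induction n arbitrary: p q)
  case 0
  then have "is_unit p" by (metis dvd_triv_left power_0)
  then show ?case using unit_bitpoly by (metis power_0)
next
  case (Suc n)
  have "poly (p * q) 0 = 0" using Suc.prems by simp
  then have c: "poly p 0 = 0 \<or> poly q 0 = 0" by (simp only: poly_mult mult_eq_0_iff)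
  show ?case
  proof (cases "poly p 0 = 0")
    case True
    then obtain p' where p': "p = [:0,1:] * p'" using poly_eq_0_iff_dvd[of p 0] by auto
    then have "[:0,1:] * (p' * q) = [:0,1:] * [:0,1:] ^ n" using Suc.prems by (simp add: ac_simps)
    then have "p' * q = [:0,1:] ^ n" by (metis mult_left_cancel pCons_eq_0_iff zero_neq_one)
    then obtain x where "p' = [:0,1:] ^ x" using Suc.IH by blast
    then show ?thesis using p' by (metis power_Suc)
  next
    case False
    then have "poly q 0 = 0" using c by simp
    then obtain q' where q': "q = [:0,1:] * q'" using poly_eq_0_iff_dvd[of q 0] by auto
    then have "[:0,1:] * (p * q') = [:0,1:] * [:0,1:] ^ n" using Suc.prems by (simp add: ac_simps)
    then have "p * q' = [:0,1:] ^ n" by (metis mult_left_cancel pCons_eq_0_iff zero_neq_one)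
    then show ?thesis using Suc.IH by blast
  qed
qed

lemma tf_factor:
  fixes p q f :: "bit poly"
  assumes pf: "prime_elem f"
  shows "p * q = [:0,1:] ^ n * f ^ m \<Longrightarrow> \<exists>x y. p = [:0,1:] ^ x * f ^ y"
proof (induction m arbitrary: p q)
  case 0
  then show ?case using t_pow_factor by (metis mult_1_right power_0)
next
  case (Suc m)
  have f0: "f \<noteq> 0" using pf by (simp add: prime_elem_def)
  have "f dvd p * q" using Suc.prems by simp
  then have "f dvd p \<or> f dvd q" using pf prime_elem_dvd_mult_iff by blast
  then show ?case
  proof
    assume "f dvd p"
    then obtain p' where p': "p = f * p'" by blast
    then have "f * (p' * q) = f * ([:0,1:] ^ n * f ^ m)" using Suc.prems by (simp add: ac_simps)
    then have "p' * q = [:0,1:] ^ n * f ^ m" using f0 by simp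
    then obtain x y where "p' = [:0,1:] ^ x * f ^ y" using Suc.IH by blast
    then have "p = [:0,1:] ^ x * f ^ Suc y" using p' by (simp add: ac_simps)
    then show ?thesis by blast
  next
    assume "f dvd q"
    then obtain q' where q': "q = f * q'" by blast
    then have "f * (p * q') = f * ([:0,1:] ^ n * f ^ m)" using Suc.prems by (simp add: ac_simps)
    then have "p * q' = [:0,1:] ^ n * f ^ m" using f0 by simp
    then show ?thesis using Suc.IH by blast
  qed
qed

lemma unit_is_Ef:
  fixes f :: "bit poly"
  assumes pf: "prime_elem f" and u: "u \<in> units_Rf f"
  shows "\<exists>a b. u = Ef f a b"
proof -
  have f0: "f \<noteq> 0" using pf by (simp add: prime_elem_def)
  obtain v where uR: "u \<in> Rf f" and vR: "v \<in> Rf f" and uv: "u * v = 1"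
    using u unfolding units_Rf_def by blast
  obtain p a b where up: "u = Fract p (monom 1 a * f ^ b)" using uR unfolding Rf_def by blast
  obtain q c e where vq: "v = Fract q (monom 1 c * f ^ e)" using vR unfolding Rf_def by blast
  have nz: "monom 1 a * f ^ b * (monom 1 c * f ^ e) \<noteq> 0" using f0 by simp
  have "Fract (p * q) (monom 1 a * f ^ b * (monom 1 c * f ^ e)) = Fract 1 1"
    using uv up vq by (simp add: One_fract_def)
  then have "p * q = monom 1 a * f ^ b * (monom 1 c * f ^ e)" using nz by (simp add: eq_fract)
  also have "\<dots> = [:0,1:] ^ (a + c) * f ^ (b + e)"
    by (simp add: monom_altdef power_add ac_simps)
  finally obtain x y where pxy: "p = [:0,1:] ^ x * f ^ y" using tf_factor[OF pf] by blast
  have "u = to_fract (monom 1 x * f ^ y) / to_fract (monom 1 a * f ^ b)"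
    using up pxy by (simp add: Fract_conv_to_fract monom_altdef del: to_fract_mult)
  also have "\<dots> = Ef f (int x) (int y) / Ef f (int a) (int b)" by (simp add: Ef_nonneg del: to_fract_mult)
  also have "\<dots> = Ef f (int x - int a) (int y - int b)"
    by (simp add: divide_inverse Ef_inverse Ef_mult[OF f0])
  finally show ?thesis by blast
qed

lemma Ef_one_iff:
  fixes f :: "bit poly"
  assumes f0: "f \<noteq> 0" and dpos: "degree f > 0" and c0: "coeff f 0 = 1" and nd: "\<not> f dvd [:0,1:]"
    and pf: "prime_elem f" and eq: "Ef f a b = Ef f c e"
  shows "a = c \<and> b = e"
proof -
  define N where "N = nat (\<bar>a\<bar> + \<bar>c\<bar>)"
  define M where "M = nat (\<bar>b\<bar> + \<bar>e\<bar>)"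
  have eq': "(\<Sum>i\<in>{0::nat}. Ef f a b) = Ef f c e" using eq by simp
  have peq: "(\<Sum>i\<in>{0::nat}. monom 1 (nat (a + int N)) * f ^ nat (b + int M)) = monom 1 (nat (c + int N)) * f ^ nat (e + int M)"
    by (rule clear_denoms[OF f0 _ eq', of N M]) (auto simp: N_def M_def)
  have "nat (c + int N) = nat (a + int N)"
    by (rule sum_low[OF c0 _ peq]) auto
  then have 1: "a = c" unfolding N_def by simp
  have "nat (e + int M) = nat (b + int M)"
    by (rule sum_fval[OF pf nd dpos _ peq, of 0]) auto
  then have 2: "b = e" unfolding M_def by simp
  show ?thesis using 1 2 by simp
qed

lemma to_fract_in_Rf: "to_fract p \<in> Rf f"
proof -
  have "to_fract p = Fract p (monom 1 0 * f ^ 0)" by (simp add: to_fract_def monom_0 one_pCons)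
  then show ?thesis unfolding Rf_def by blast
qed

lemma phi_sum:
  assumes add: "\<forall>x\<in>Rf f. \<forall>y\<in>Rf f. \<phi> (x + y) = \<phi> x + \<phi> y" and fin: "finite A" and A: "A \<noteq> {}"
  shows "\<phi> (\<Sum>i\<in>A. to_fract (p i)) = (\<Sum>i\<in>A. \<phi> (to_fract (p i)))"
  using fin A
proof (induction A rule: finite_ne_induct)
  case (singleton x)
  then show ?case by simp
next
  case (insert x F)
  have "(\<Sum>i\<in>insert x F. to_fract (p i)) = to_fract (p x) + to_fract (\<Sum>i\<in>F. p i)"
    using insert by simp
  then have "\<phi> (\<Sum>i\<in>insert x F. to_fract (p i)) = \<phi> (to_fract (p x)) + \<phi> (to_fract (\<Sum>i\<in>F. p i))"
    using add to_fract_in_Rf by metis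
  also have "\<phi> (to_fract (\<Sum>i\<in>F. p i)) = (\<Sum>i\<in>F. \<phi> (to_fract (p i)))"
    using insert by simp
  finally show ?case using insert by simp
qed

lemma main_a:
  fixes f :: "bit poly" and \<phi> \<Phi> :: "bit poly fract \<Rightarrow> bit poly fract"
  assumes irr: "irreducible f" and nt: "f \<noteq> [:0,1:]" and nsr: "\<not> self_reciprocal f"
    and add: "\<forall>x\<in>Rf f. \<forall>y\<in>Rf f. \<phi> (x + y) = \<phi> x + \<phi> y"
    and injphi: "inj_on \<phi> (Rf f)"
    and mapP: "\<forall>u\<in>units_Rf f. \<Phi> u \<in> units_Rf f"
    and injP: "inj_on \<Phi> (units_Rf f)"
    and surjP: "units_Rf f \<subseteq> \<Phi> ` units_Rf f"
    and mulP: "\<forall>u\<in>units_Rf f. \<forall>v\<in>units_Rf f. \<Phi> (u * v) = \<Phi> u * \<Phi> v"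
    and H: "\<forall>u\<in>units_Rf f. \<Phi> u * \<phi> 1 = \<phi> u"
  shows "\<forall>u\<in>units_Rf f. \<Phi> u = u"
proof -
  let ?U = "units_Rf f"
  note fp = f_props[OF irr nt nsr]
  have f0: "f \<noteq> 0" and dpos: "degree f > 0" and c0: "coeff f 0 = 1" and p1: "poly f 1 = 1"
    and nd: "\<not> f dvd [:0,1:]" and pf: "prime_elem f" using fp by auto
  define S where "S = {i. i \<le> degree f \<and> coeff f i \<noteq> 0}"
  note SF = S_facts[OF f0 c0 p1, folded S_def]
  define d where "d = degree f"
  define c where "c = \<phi> 1"
  have EU: "Ef f x y \<in> ?U" for x y using Ef_unit[OF f0] .
  have UE: "u \<in> ?U \<Longrightarrow> \<exists>x y. u = Ef f x y" for u using unit_is_Ef[OF pf] by blast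
  have Einj: "Ef f x y = Ef f x' y' \<Longrightarrow> x = x' \<and> y = y'" for x y x' y'
    using Ef_one_iff[OF f0 dpos c0 nd pf] by blast
  have 0: "\<phi> 0 = 0"
  proof -
    have z: "(0::bit poly fract) \<in> Rf f" using to_fract_in_Rf[of 0 f] by simp
    have "\<phi> (0 + 0) = \<phi> 0 + \<phi> 0" using add z by blast
    then have "\<phi> 0 = \<phi> 0 + \<phi> 0" by (simp only: add_0_right)
    then show ?thesis by (simp only: fract_char2)
  qed
  have cnz: "c \<noteq> 0"
  proof
    assume "c = 0"
    then have "\<phi> 1 = \<phi> 0" using 0 c_def by simp
    then have "(1::bit poly fract) = 0" using injphi to_fract_in_Rf[of 1 f] to_fract_in_Rf[of 0 f]
      by (metis inj_onD to_fract_0 to_fract_1)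
    then show False by simp
  qed
  have one: "\<Phi> 1 = 1"
  proof -
    have "1 \<in> ?U" using EU[of 0 0] Ef_00 by metis
    then have "\<Phi> 1 * c = c" using H c_def by simp
    then show ?thesis using cnz by simp
  qed
  have Pinv: "\<Phi> (inverse u) = inverse (\<Phi> u)" if u: "u \<in> ?U" for u
  proof -
    obtain x y where uxy: "u = Ef f x y" using UE[OF u] by blast
    have iu: "inverse u = Ef f (-x) (-y)" using uxy Ef_inverse by simp
    have "u * inverse u = 1" using uxy Ef_nz[OF f0] by simp
    then have "\<Phi> u * \<Phi> (inverse u) = 1" using mulP u EU iu one by metis
    then show ?thesis by (metis inverse_unique)
  qed
  have Ppow: "\<Phi> (u ^ n) = \<Phi> u ^ n" if u: "u \<in> ?U" for u n
  proof (induction n)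
    case 0 then show ?case using one by simp
  next
    case (Suc n)
    obtain x y where uxy: "u = Ef f x y" using UE[OF u] by blast
    have "u ^ n \<in> ?U" using uxy Ef_pow EU by metis
    then have "\<Phi> (u * u ^ n) = \<Phi> u * \<Phi> (u ^ n)" using mulP u by blast
    then show ?case using Suc by simp
  qed
  have Ppowi: "\<Phi> (u powi n) = \<Phi> u powi n" if u: "u \<in> ?U" for u n
  proof (cases "n \<ge> 0")
    case True
    then obtain m where "n = int m" by (metis nonneg_eq_int)
    then show ?thesis using Ppow[OF u] by simp
  next
    case False
    then obtain m where m: "n = - int m" by (metis le_cases neg_0_le_iff_le nonneg_eq_int minus_minus)
    obtain x y where uxy: "u = Ef f x y" using UE[OF u] by blast
    have "u ^ m \<in> ?U" using uxy Ef_pow EU by metis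
    then show ?thesis using m Ppow[OF u] Pinv by (simp add: power_int_minus)
  qed
  define T where "T = \<Phi> Tf"
  define FF where "FF = \<Phi> (to_fract f)"
  have TU: "Tf \<in> ?U" using EU[of 1 0] Ef_10 by metis
  have FU: "to_fract f \<in> ?U" using EU[of 0 1] Ef_01 by metis
  have PE: "\<Phi> (Ef f x y) = T powi x * FF powi y" for x y
  proof -
    have a: "Tf powi x = Ef f x 0" "to_fract f powi y = Ef f 0 y" by (simp_all add: Ef_def)
    have "\<Phi> (Ef f x y) = \<Phi> (Tf powi x * to_fract f powi y)" by (simp add: Ef_def)
    also have "\<dots> = \<Phi> (Tf powi x) * \<Phi> (to_fract f powi y)" using mulP a EU by metis
    finally show ?thesis using Ppowi TU FU T_def FF_def by simp
  qed
  have tm: "to_fract (monom 1 i :: bit poly) = Tf ^ i" for i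
    by (simp add: Tf_def monom_altdef to_fract_power)
  have TiU: "Tf ^ i \<in> ?U" for i using TU Ef_pow EU Ef_10 by metis
  have Snz: "S \<noteq> {}" using SF(3) by blast
  have "FF * c = \<phi> (to_fract f)" using H FU FF_def c_def by simp
  also have "to_fract f = (\<Sum>i\<in>S. to_fract (monom 1 i))" using SF(6) by (metis to_fract_sum)
  also have "\<phi> \<dots> = (\<Sum>i\<in>S. \<phi> (to_fract (monom 1 i)))" using phi_sum[OF add SF(1) Snz] .
  also have "\<dots> = (\<Sum>i\<in>S. T ^ i * c)"
  proof (rule sum.cong)
    fix i
    have "\<phi> (Tf ^ i) = \<Phi> (Tf ^ i) * c" using H TiU c_def by simp
    then show "\<phi> (to_fract (monom 1 i)) = T ^ i * c" using tm Ppow[OF TU] T_def by simp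
  qed simp
  also have "\<dots> = (\<Sum>i\<in>S. T ^ i) * c" by (simp add: sum_distrib_right)
  finally have rel: "FF = (\<Sum>i\<in>S. T ^ i)" using cnz by simp
  obtain a b where ab: "T = Ef f a b" using UE mapP TU T_def by blast
  obtain k l where kl: "FF = Ef f k l" using UE mapP FU FF_def by blast
  have "(\<Sum>i\<in>S. Ef f (a * int i) (b * int i)) = Ef f k l"
    using rel ab kl by (simp add: Ef_pow)
  then have C: "b = 0 \<and> k = int d * min a 0 \<and> l = \<bar>a\<bar>"
    using core[OF f0 dpos c0 nd pf SF(1,2,3,4,5)] d_def by blast
  have anz: "a \<noteq> 0"
  proof
    assume "a = 0"
    then have "T = \<Phi> 1" using ab C one Ef_00 by simp
    then have "Tf = 1" using injP TU EU[of 0 0] Ef_00 T_def by (metis inj_onD)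
    then have "to_fract ([:0,1:] :: bit poly) = to_fract 1" by (simp add: Tf_def)
    then have "([:0,1:] :: bit poly) = 1" by (simp only: to_fract_eq_iff)
    then show False by (metis one_pCons pCons_eq_iff zero_neq_one)
  qed
  obtain w where w: "w \<in> ?U" "Tf = \<Phi> w" using surjP TU by blast
  obtain x y where wxy: "w = Ef f x y" using UE[OF w(1)] by blast
  have "Ef f 1 0 = Ef f (a * x + k * y) (l * y)"
    using w wxy PE ab kl C by (simp add: Ef_powi Ef_mult[OF f0] Ef_10)
  then have "1 = a * x + k * y \<and> 0 = l * y" by (rule Einj)
  then have xy: "a * x + k * y = 1" "l * y = 0" by simp_all
  then have "y = 0" using C anz by simp
  then have "a * x = 1" using xy by simp
  then have "a = 1 \<or> a = -1" using zmult_eq_1_iff by blast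
  then show ?thesis
  proof
    assume a1: "a = 1"
    then have "T = Tf" "FF = to_fract f" using ab kl C Ef_10 Ef_01 by auto
    then show ?thesis
    proof (intro ballI)
      fix u assume "u \<in> ?U"
      then obtain x y where "u = Ef f x y" using UE by blast
      then show "\<Phi> u = u" using PE \<open>T = Tf\<close> \<open>FF = to_fract f\<close> by (simp add: Ef_def)
    qed
  next
    assume am: "a = -1"
    then have kk: "k = - int d" and ll: "l = 1" using C by auto
    have eq1: "(\<Sum>i\<in>S. Ef f (- int i) 0) = Ef f (- int d) 1"
      using rel ab kl C am kk ll by (simp add: Ef_pow)
    have peq: "(\<Sum>i\<in>S. monom 1 (nat (- int i + int d)) * f ^ nat (0 + int 0)) = monom 1 (nat (- int d + int d)) * f ^ nat (1 + int 0)"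
      by (rule clear_denoms[OF f0 SF(1) eq1]) (use SF(2) d_def in auto)
    have nd': "nat (int d - int i) = d - i" for i by (cases "i \<le> d") auto
    from peq have fr: "f = (\<Sum>i\<in>S. monom 1 (d - i))" by (simp add: nd')
    have "reflect_poly f = f"
    proof (rule poly_eqI)
      fix n
      show "coeff (reflect_poly f) n = coeff f n"
      proof (cases "n \<le> d")
        case True
        have "coeff f n = (\<Sum>i\<in>S. coeff (monom 1 (d - i)) n)" using fr coeff_sum by metis
        also have "\<dots> = (\<Sum>i\<in>S. if i = d - n then (1::bit) else 0)"
          by (rule sum.cong) (use True SF(2) d_def in auto)
        also have "\<dots> = (if d - n \<in> S then 1 else 0)" using SF(1) by simp
        also have "\<dots> = coeff f (d - n)" unfolding S_def d_def by auto
        finally show ?thesis using True d_def by (simp add: coeff_reflect_poly)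
      next
        case False
        then show ?thesis using d_def by (simp add: coeff_reflect_poly coeff_eq_0)
      qed
    qed
    then show ?thesis using nsr by (simp add: self_reciprocal_def)
  qed
qed


theorem mainTheorem15:
  fixes f :: "bit poly"
    and \<phi> \<Phi> :: "bit poly fract \<Rightarrow> bit poly fract"
  assumes "irreducible f" and "f \<noteq> [:0, 1:]" and "\<not> self_reciprocal f"
    and "additive_aut f \<phi>" and "unit_group_aut f \<Phi>"
  shows "((\<forall>u \<in> units_Rf f. \<Phi> u * \<phi> 1 = \<phi> u) \<longrightarrow> (\<forall>u \<in> units_Rf f. \<Phi> u = u))
       \<and> ((\<forall>u \<in> units_Rf f. \<Phi> u * \<phi> 1 = \<phi> (inverse u)) \<longrightarrow> (\<forall>u \<in> units_Rf f. \<Phi> u = inverse u))"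
proof -
  let ?U = "units_Rf f"
  note fp = f_props[OF assms(1,2,3)]
  have f0: "f \<noteq> 0" and pf: "prime_elem f" using fp by auto
  have add: "\<forall>x\<in>Rf f. \<forall>y\<in>Rf f. \<phi> (x + y) = \<phi> x + \<phi> y" and injphi: "inj_on \<phi> (Rf f)"
    using assms(4) unfolding additive_aut_def bij_betw_def by auto
  have bijP: "bij_betw \<Phi> ?U ?U" and mulP: "\<forall>u\<in>?U. \<forall>v\<in>?U. \<Phi> (u * v) = \<Phi> u * \<Phi> v"
    using assms(5) unfolding unit_group_aut_def by auto
  have mapP: "\<forall>u\<in>?U. \<Phi> u \<in> ?U" using bijP by (auto simp: bij_betw_def)
  have injP: "inj_on \<Phi> ?U" using bijP by (auto simp: bij_betw_def)
  have surjP: "?U \<subseteq> \<Phi> ` ?U" using bijP by (auto simp: bij_betw_def)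
  have invU: "inverse u \<in> ?U" if uU: "u \<in> ?U" for u
  proof -
    obtain x y where "u = Ef f x y" using unit_is_Ef[OF pf uU] by blast
    then show ?thesis using Ef_inverse Ef_unit[OF f0] by simp
  qed
  show ?thesis
  proof (intro conjI impI)
    assume H: "\<forall>u\<in>?U. \<Phi> u * \<phi> 1 = \<phi> u"
    show "\<forall>u\<in>?U. \<Phi> u = u"
      by (rule main_a[OF assms(1,2,3) add injphi mapP injP surjP mulP H])
  next
    assume H: "\<forall>u\<in>?U. \<Phi> u * \<phi> 1 = \<phi> (inverse u)"
    define \<Psi> where "\<Psi> u = \<Phi> (inverse u)" for u
    have mapQ: "\<forall>u\<in>?U. \<Psi> u \<in> ?U" using mapP invU \<Psi>_def by simp
    have injQ: "inj_on \<Psi> ?U"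
    proof (rule inj_onI)
      fix u v assume "u \<in> ?U" "v \<in> ?U" "\<Psi> u = \<Psi> v"
      then have "inverse u = inverse v" using injP invU \<Psi>_def by (metis inj_onD)
      then show "u = v" by simp
    qed
    have surjQ: "?U \<subseteq> \<Psi> ` ?U"
    proof
      fix w assume "w \<in> ?U"
      then obtain z where z: "z \<in> ?U" "w = \<Phi> z" using surjP by blast
      then have "w = \<Psi> (inverse z)" using \<Psi>_def by simp
      then show "w \<in> \<Psi> ` ?U" using invU[OF z(1)] by blast
    qed
    have mulQ: "\<forall>u\<in>?U. \<forall>v\<in>?U. \<Psi> (u * v) = \<Psi> u * \<Psi> v"
      using mulP invU \<Psi>_def by (simp add: inverse_mult_distrib)
    have HQ: "\<forall>u\<in>?U. \<Psi> u * \<phi> 1 = \<phi> u"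
    proof
      fix u assume "u \<in> ?U"
      then show "\<Psi> u * \<phi> 1 = \<phi> u" using H invU \<Psi>_def by (metis inverse_inverse_eq)
    qed
    have Q: "\<forall>u\<in>?U. \<Psi> u = u"
      by (rule main_a[OF assms(1,2,3) add injphi mapQ injQ surjQ mulQ HQ])
    show "\<forall>u\<in>?U. \<Phi> u = inverse u"
    proof
      fix u assume u: "u \<in> ?U"
      have "\<Psi> (inverse u) = inverse u" using Q invU[OF u] by blast
      then show "\<Phi> u = inverse u" using \<Psi>_def by simp
    qed
  qed
qed

end
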